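(* Suppose that there exists an integer ${}^\lambda\mathrm{H}_t(m,n;s,k)$ with $\lambda$ odd. (1) If $t$ divides $\frac{nk}{\lambda}$, then $\frac{nk}{\lambda}\equiv 0\pmod 4$ or $\frac{nk}{\lambda}\equiv -t\equiv \pm1\pmod 4$. (2) If $t=\frac{2nk}{\lambda}$, then $s$ and $k$ are both even. (3) If $t\neq\frac{2nk}{\lambda}$ and $t$ does not divide $\frac{nk}{\lambda}$, then $\frac{2nk}{\lambda}+t\equiv 0\pmod 8$.
   Context: Let $m,n,s,k,\lambda,t$ be positive integers with $t$ dividing $\frac{2nk}{\lambda}$, let $v=\frac{2nk}{\lambda}+t$ and let $J$ be the subgroup of $\mathbb{Z}_v$ of order $t$. A $\lambda$-fold Heffter array ${}^\lambda\mathrm{H}_t(m,n;s,k)$ is an $m\times n$ partially filled array with entries in $\mathbb{Z}_v$ such that: (a) each row has exactly $s$ and each column exactly $k$ filled cells; (b) the multiset $\{\pm x: x$ an entry of a filled cell$\}$ contains each element of $\mathbb{Z}_v\setminus J$ exactly $\lambda$ times and no element of $J$; (c) every row and every column sums to $0$ in $\mathbb{Z}_v$. It is called integer if, when each entry is represented by its unique integer representative in $\pm\{1,2,\dots,\lfloor v/2\rfloor\}$, every row and every column sums to $0$ in $\mathbb{Z}$. *)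

theory Defs
  imports Main "HOL-Library.Multiset"
begin

text \<open>An m x n partially filled array is modelled as a function
  A :: nat => nat => int option, with A i j = None meaning "empty cell".
  Elements of Z_v are represented by their canonical representatives in {0..<v}.\<close>

definition heff_v :: "nat \<Rightarrow> nat \<Rightarrow> nat \<Rightarrow> nat \<Rightarrow> int" where
  "heff_v lam t n k = int (2 * n * k div lam + t)"

definition filled_cells :: "nat \<Rightarrow> nat \<Rightarrow> (nat \<Rightarrow> nat \<Rightarrow> int option) \<Rightarrow> (nat \<times> nat) set" where
  "filled_cells m n A = {(i, j). i < m \<and> j < n \<and> A i j \<noteq> None}"

definition entry :: "(nat \<Rightarrow> nat \<Rightarrow> int option) \<Rightarrow> nat \<Rightarrow> nat \<Rightarrow> int" where
  "entry A i j = (case A i j of None \<Rightarrow> 0 | Some a \<Rightarrow> a)"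

definition pm_entries :: "int \<Rightarrow> nat \<Rightarrow> nat \<Rightarrow> (nat \<Rightarrow> nat \<Rightarrow> int option) \<Rightarrow> int multiset" where
  "pm_entries v m n A =
     image_mset (\<lambda>(i, j). entry A i j mod v) (mset_set (filled_cells m n A)) +
     image_mset (\<lambda>(i, j). (- entry A i j) mod v) (mset_set (filled_cells m n A))"

text \<open>The subgroup J of Z_v of order t (t dividing v): the multiples of v/t.\<close>
definition subgrp_J :: "int \<Rightarrow> nat \<Rightarrow> int set" where
  "subgrp_J v t = {x. 0 \<le> x \<and> x < v \<and> (v div int t) dvd x}"

definition heffter ::
  "nat \<Rightarrow> nat \<Rightarrow> nat \<Rightarrow> nat \<Rightarrow> nat \<Rightarrow> nat \<Rightarrow> (nat \<Rightarrow> nat \<Rightarrow> int option) \<Rightarrow> bool" where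
  "heffter lam t m n s k A \<longleftrightarrow>
     (let v = heff_v lam t n k in
      lam dvd 2 * n * k \<and> t dvd (2 * n * k div lam) \<and>
      (\<forall>i j. (m \<le> i \<or> n \<le> j) \<longrightarrow> A i j = None) \<and>
      (\<forall>i j a. A i j = Some a \<longrightarrow> 0 \<le> a \<and> a < v) \<and>
      (\<forall>i<m. card {j. j < n \<and> A i j \<noteq> None} = s) \<and>
      (\<forall>j<n. card {i. i < m \<and> A i j \<noteq> None} = k) \<and>
      (\<forall>x. 0 \<le> x \<and> x < v \<longrightarrow>
          count (pm_entries v m n A) x = (if x \<in> subgrp_J v t then 0 else lam)) \<and>
      (\<forall>i<m. (\<Sum>j<n. entry A i j) mod v = 0) \<and>
      (\<forall>j<n. (\<Sum>i<m. entry A i j) mod v = 0))"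

definition int_rep :: "int \<Rightarrow> int \<Rightarrow> int" where
  "int_rep v x = (if x mod v \<le> v div 2 then x mod v else x mod v - v)"

definition integer_heffter ::
  "nat \<Rightarrow> nat \<Rightarrow> nat \<Rightarrow> nat \<Rightarrow> nat \<Rightarrow> nat \<Rightarrow> (nat \<Rightarrow> nat \<Rightarrow> int option) \<Rightarrow> bool" where
  "integer_heffter lam t m n s k A \<longleftrightarrow>
     heffter lam t m n s k A \<and>
     (let v = heff_v lam t n k in
      (\<forall>i<m. (\<Sum>j<n. int_rep v (entry A i j)) = 0) \<and>
      (\<forall>j<n. (\<Sum>i<m. int_rep v (entry A i j)) = 0))"

end

theory Submission
  imports Defs
begin


lemma size_sum_count:
  "finite S \<Longrightarrow> set_mset M \<subseteq> S \<Longrightarrow> size M = (\<Sum>x\<in>S. count M x)"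
proof (induction M)
  case empty then show ?case by simp
next
  case (add x M)
  have "(\<Sum>y\<in>S. count (add_mset x M) y) = (\<Sum>y\<in>S. count M y + (if x = y then 1 else 0))"
    by (rule sum.cong) auto
  also have "\<dots> = (\<Sum>y\<in>S. count M y) + 1" using add.prems by (simp add: sum.distrib)
  finally show ?case using add by simp
qed

lemma even_sum_card:
  fixes f :: "'a \<Rightarrow> int"
  assumes "finite S"
  shows "even (sum f S) \<longleftrightarrow> even (card {x\<in>S. odd (f x)})"
  using assms
proof (induction S rule: finite_induct)
  case empty then show ?case by simp
next
  case (insert x S)
  have fin: "finite {y\<in>S. odd (f y)}" using insert by simp
  show ?case
  proof (cases "odd (f x)")
    case True
    then have "{y\<in>insert x S. odd (f y)} = insert x {y\<in>S. odd (f y)}" by auto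
    then show ?thesis using insert True fin by simp
  next
    case False
    then have "{y\<in>insert x S. odd (f y)} = {y\<in>S. odd (f y)}" by auto
    then show ?thesis using insert False by simp
  qed
qed

lemma card_odd_upto_nat:
  "card {a::int. 1 \<le> a \<and> a \<le> int n \<and> odd a} = (n + 1) div 2"
proof (induction n)
  case 0
  have e: "{a::int. 1 \<le> a \<and> a \<le> int 0 \<and> odd a} = {}" by auto
  show ?case by (subst e) simp
next
  case (Suc n)
  show ?case
  proof (cases "odd (int (Suc n))")
    case True
    then have "{a::int. 1 \<le> a \<and> a \<le> int (Suc n) \<and> odd a} = insert (int (Suc n)) {a::int. 1 \<le> a \<and> a \<le> int n \<and> odd a}" by auto
    moreover have "finite {a::int. 1 \<le> a \<and> a \<le> int n \<and> odd a}" by (rule finite_subset[of _ "{1..int n}"]) auto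
    ultimately show ?thesis using Suc True by simp
  next
    case False
    then have "{a::int. 1 \<le> a \<and> a \<le> int (Suc n) \<and> odd a} = {a::int. 1 \<le> a \<and> a \<le> int n \<and> odd a}"
      by (auto, smt (verit) of_nat_Suc)
    then show ?thesis using Suc False by simp
  qed
qed

lemma card_odd_upto:
  fixes N :: int assumes "0 \<le> N"
  shows "int (card {a::int. 1 \<le> a \<and> a \<le> N \<and> odd a}) = (N + 1) div 2"
proof -
  obtain n where "N = int n" using assms nonneg_eq_int by blast
  then show ?thesis using card_odd_upto_nat[of n] by (simp add: zdiv_int)
qed

lemma card_odd_mult:
  fixes q N :: int assumes "0 < q" "odd q" "0 \<le> N"
  shows "card {a. 1 \<le> a \<and> a \<le> N \<and> odd a \<and> q dvd a} = card {j::int. 1 \<le> j \<and> j \<le> N div q \<and> odd j}"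
proof -
  have inj: "inj_on (\<lambda>j. j * q) {j::int. 1 \<le> j \<and> j \<le> N div q \<and> odd j}"
    using assms by (auto simp: inj_on_def)
  have "(\<lambda>j. j * q) ` {j::int. 1 \<le> j \<and> j \<le> N div q \<and> odd j} = {a. 1 \<le> a \<and> a \<le> N \<and> odd a \<and> q dvd a}"
  proof (rule set_eqI, rule iffI)
    fix a assume "a \<in> (\<lambda>j. j * q) ` {j::int. 1 \<le> j \<and> j \<le> N div q \<and> odd j}"
    then obtain j where j: "a = j * q" "1 \<le> j" "j \<le> N div q" "odd j" by auto
    have "j * q \<le> (N div q) * q" using j assms by (simp add: mult_right_mono)
    also have "\<dots> \<le> N" using assms by (metis mult.commute mult_div_mod_eq le_add_same_cancel1 pos_mod_sign)
    finally have "a \<le> N" using j by simp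
    moreover have "1 \<le> a" using j assms by (simp add: order_trans[OF _ mult_right_mono[of 1 j q]])
    ultimately show "a \<in> {a. 1 \<le> a \<and> a \<le> N \<and> odd a \<and> q dvd a}" using j assms by auto
  next
    fix a assume "a \<in> {a. 1 \<le> a \<and> a \<le> N \<and> odd a \<and> q dvd a}"
    then have a0: "1 \<le> a" "a \<le> N" "odd a" "q dvd a" by auto
    then obtain j where "a = q * j" by (auto elim!: dvdE)
    then have a: "a = j * q" "1 \<le> a" "a \<le> N" "odd a" using a0 by (auto simp: mult.commute)
    have "0 < j" using a assms by (metis linorder_not_le mult_nonpos_nonneg not_one_le_zero less_imp_le order_trans)
    moreover have "j \<le> N div q" using a assms using zdiv_mono1[of "j*q" N q] by simp
    ultimately show "a \<in> (\<lambda>j. j * q) ` {j::int. 1 \<le> j \<and> j \<le> N div q \<and> odd j}" using a by auto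
  qed
  then show ?thesis using card_image[OF inj] by simp
qed

lemma pointwise:
  fixes x v :: int
  assumes "0 < x" "x < v" "2 * x \<noteq> v"
  shows "((1 \<le> x \<and> x \<le> v div 2 \<and> odd x) \<or> (1 \<le> v - x \<and> v - x \<le> v div 2 \<and> odd (v - x))
          \<longleftrightarrow> odd (int_rep v x))
     \<and> \<not> ((1 \<le> x \<and> x \<le> v div 2) \<and> (1 \<le> v - x \<and> v - x \<le> v div 2))"
proof -
  have m: "x mod v = x" using assms by simp
  have o: "odd (v - x) \<longleftrightarrow> odd (x - v)"
    by (metis add.inverse_neutral even_minus minus_diff_eq)
  show ?thesis
  proof (cases "x \<le> v div 2")
    case True
    then have "\<not> (v - x \<le> v div 2)" using assms by linarith
    then show ?thesis using True assms unfolding int_rep_def m by auto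
  next
    case False
    then have "v - x \<le> v div 2" "1 \<le> v - x" using assms by linarith+
    then show ?thesis using False assms o unfolding int_rep_def m by auto
  qed
qed



lemma key:
  fixes v :: int and F :: "'c set" and e :: "'c \<Rightarrow> int" and J :: "int set" and lam :: nat
    and PM :: "int multiset"
  assumes fin: "finite F" and vpos: "0 < v"
    and rng: "\<forall>c\<in>F. 0 \<le> e c \<and> e c < v"
    and PM: "PM = image_mset (\<lambda>c. e c mod v) (mset_set F) + image_mset (\<lambda>c. (- e c) mod v) (mset_set F)"
    and cnt: "\<forall>x. 0 \<le> x \<and> x < v \<longrightarrow> count PM x = (if x \<in> J then 0 else lam)"
    and J0: "0 \<in> J" and Jhalf: "\<forall>x. 2*x = v \<longrightarrow> x \<in> J"
    and Jneg: "\<forall>x. 0 < x \<and> x < v \<longrightarrow> (x \<in> J \<longleftrightarrow> v - x \<in> J)"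
  shows "card {c\<in>F. odd (int_rep v (e c))} = lam * card {a. 1 \<le> a \<and> a \<le> v div 2 \<and> odd a \<and> a \<notin> J}"
proof -
  define P where "P x = (1 \<le> x \<and> x \<le> v div 2 \<and> odd x \<and> x \<notin> J)" for x
  have finA: "finite (Collect P)"
    by (rule finite_subset[of _ "{1..v div 2}"]) (auto simp: P_def)
  have "set_mset (filter_mset P PM) \<subseteq> Collect P" by auto
  then have s1: "size (filter_mset P PM) = (\<Sum>x\<in>Collect P. count (filter_mset P PM) x)"
    by (rule size_sum_count[OF finA])
  also have "\<dots> = (\<Sum>x\<in>Collect P. lam)"
  proof (rule sum.cong)
    fix x assume "x \<in> Collect P"
    then have "P x" "0 \<le> x" "x < v" using vpos by (auto simp: P_def)
    then show "count (filter_mset P PM) x = lam" using cnt by (simp add: P_def)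
  qed simp
  finally have sz1: "size (filter_mset P PM) = lam * card (Collect P)" by simp
  have sz2: "size (filter_mset P PM) = card {c\<in>F. P (e c mod v)} + card {c\<in>F. P ((- e c) mod v)}"
    unfolding PM by (simp only: filter_union_mset filter_mset_image_mset filter_mset_mset_set[OF fin] size_union size_image_mset size_mset_set)
  have notJ: "e c \<notin> J" if "c \<in> F" for c
  proof -
    have "e c mod v \<in># image_mset (\<lambda>c. e c mod v) (mset_set F)" using that fin by simp
    then have "e c mod v \<in># PM" unfolding PM by simp
    moreover have "e c mod v = e c" using rng that by simp
    ultimately have "count PM (e c) \<noteq> 0" by simp
    moreover have "count PM (e c) = (if e c \<in> J then 0 else lam)" using cnt rng that by simp
    ultimately show ?thesis by auto
  qed
  have pt: "(P (e c mod v) \<or> P ((- e c) mod v) \<longleftrightarrow> odd (int_rep v (e c)))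
             \<and> \<not> (P (e c mod v) \<and> P ((- e c) mod v))" if "c \<in> F" for c
  proof -
    let ?x = "e c"
    have x: "0 \<le> ?x" "?x < v" using rng that by auto
    have "?x \<noteq> 0" using notJ[OF that] J0 by auto
    then have xp: "0 < ?x" using x by simp
    have h: "2 * ?x \<noteq> v" using notJ[OF that] Jhalf by auto
    have "?x \<in> J \<longleftrightarrow> v - ?x \<in> J" using Jneg xp x by blast
    then have nj2: "v - ?x \<notin> J" using notJ[OF that] by blast
    have m1: "?x mod v = ?x" using x by simp
    have m2: "(- ?x) mod v = v - ?x"
    proof -
      have a: "(- ?x) mod v = (v - ?x) mod v" using mod_add_self1[of v "- ?x"] by simp
      have b: "(v - ?x) mod v = v - ?x" using x xp by (intro mod_pos_pos_trivial) auto
      show ?thesis using a b by simp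
    qed
    have pw: "((1 \<le> ?x \<and> ?x \<le> v div 2 \<and> odd ?x) \<or> (1 \<le> v - ?x \<and> v - ?x \<le> v div 2 \<and> odd (v - ?x))
          \<longleftrightarrow> odd (int_rep v ?x))
     \<and> \<not> ((1 \<le> ?x \<and> ?x \<le> v div 2) \<and> (1 \<le> v - ?x \<and> v - ?x \<le> v div 2))"
      by (rule pointwise[OF xp x(2) h])
    have nj1: "?x \<notin> J" by (rule notJ[OF that])
    have "P (e c mod v) = (1 \<le> ?x \<and> ?x \<le> v div 2 \<and> odd ?x)" unfolding m1 P_def using nj1 by simp
    moreover have "P ((- e c) mod v) = (1 \<le> v - ?x \<and> v - ?x \<le> v div 2 \<and> odd (v - ?x))" unfolding m2 P_def using nj2 by simp
    ultimately show ?thesis using pw by metis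
  qed
  have un: "{c\<in>F. P (e c mod v)} \<union> {c\<in>F. P ((- e c) mod v)} = {c\<in>F. odd (int_rep v (e c))}"
    using pt by blast
  have dj: "{c\<in>F. P (e c mod v)} \<inter> {c\<in>F. P ((- e c) mod v)} = {}"
    using pt by blast
  have "card {c\<in>F. odd (int_rep v (e c))} = card {c\<in>F. P (e c mod v)} + card {c\<in>F. P ((- e c) mod v)}"
    using card_Un_disjoint[of "{c\<in>F. P (e c mod v)}" "{c\<in>F. P ((- e c) mod v)}"] fin un dj by simp
  then have "card {c\<in>F. odd (int_rep v (e c))} = lam * card (Collect P)" using sz1 sz2 by simp
  moreover have "Collect P = {a. 1 \<le> a \<and> a \<le> v div 2 \<and> odd a \<and> a \<notin> J}" by (auto simp: P_def)
  ultimately show ?thesis by simp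
qed




theorem proposition4p3:
  fixes m n s k lam t :: nat
  assumes pos: "0 < m" "0 < n" "0 < s" "0 < k" "0 < lam" "0 < t"
    and odd_lam: "odd lam"
    and ex: "\<exists>A. integer_heffter lam t m n s k A"
  shows "(t dvd (n * k div lam) \<longrightarrow>
            (int (n * k div lam) mod 4 = 0 \<or>
             (int (n * k div lam) mod 4 = (- int t) mod 4 \<and>
              (int (n * k div lam) mod 4 = 1 \<or> int (n * k div lam) mod 4 = 3))))
       \<and> (t = 2 * n * k div lam \<longrightarrow> even s \<and> even k)
       \<and> (t \<noteq> 2 * n * k div lam \<and> \<not> t dvd (n * k div lam) \<longrightarrow>
            (2 * n * k div lam + t) mod 8 = 0)"
proof -
  obtain A where iA: "integer_heffter lam t m n s k A" using ex by blast
  define v where "v = heff_v lam t n k"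
  define J where "J = subgrp_J v t"
  define d where "d = n * k div lam"
  have H: "lam dvd 2 * n * k" "t dvd (2 * n * k div lam)"
      "\<forall>i j. (m \<le> i \<or> n \<le> j) \<longrightarrow> A i j = None"
      "\<forall>i j a. A i j = Some a \<longrightarrow> 0 \<le> a \<and> a < v"
      "\<forall>i<m. card {j. j < n \<and> A i j \<noteq> None} = s"
      "\<forall>j<n. card {i. i < m \<and> A i j \<noteq> None} = k"
      "\<forall>x. 0 \<le> x \<and> x < v \<longrightarrow> count (pm_entries v m n A) x = (if x \<in> J then 0 else lam)"
      "\<forall>i<m. (\<Sum>j<n. int_rep v (entry A i j)) = 0"
      "\<forall>j<n. (\<Sum>i<m. int_rep v (entry A i j)) = 0"
    using iA unfolding integer_heffter_def heffter_def Let_def v_def J_def by auto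
  have "coprime lam 2" using odd_lam by simp
  then have "lam dvd n * k" using H(1) coprime_dvd_mult_right_iff[of lam 2 "n*k"]
    by (simp add: mult.assoc mult.commute)
  then have dd: "2 * n * k div lam = 2 * d" unfolding d_def
    by (simp add: mult.assoc div_mult_swap)
  obtain p where p: "2 * d = t * p" using H(2) dd by (auto elim!: dvdE)
  have vdef: "v = int t * (int p + 1)" unfolding v_def heff_v_def dd using p
    by (simp add: algebra_simps)
  have vpos: "0 < v" using vdef pos by simp
  have vq: "v div int t = int p + 1" using vdef pos by simp
  have Jdef: "J = {x. 0 \<le> x \<and> x < v \<and> (int p + 1) dvd x}" unfolding J_def subgrp_J_def vq ..
  define F where "F = filled_cells m n A"
  define e where "e = (\<lambda>c::nat\<times>nat. entry A (fst c) (snd c))"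
  have Fbox: "F \<subseteq> {..<m} \<times> {..<n}" unfolding F_def filled_cells_def by auto
  have finF: "finite F" by (rule finite_subset[OF Fbox]) auto
  have rngF: "\<forall>c\<in>F. 0 \<le> e c \<and> e c < v"
  proof
    fix c assume "c \<in> F"
    then obtain a where "A (fst c) (snd c) = Some a" unfolding F_def filled_cells_def by auto
    then show "0 \<le> e c \<and> e c < v" using H(4) unfolding e_def entry_def by auto
  qed
  have PMeq: "pm_entries v m n A = image_mset (\<lambda>c. e c mod v) (mset_set F) + image_mset (\<lambda>c. (- e c) mod v) (mset_set F)"
    unfolding pm_entries_def F_def e_def by (simp add: split_def)
  have J0: "0 \<in> J" using Jdef vpos by simp
  have qv: "(int p + 1) dvd v" using vdef by simp
  have Jhalf: "\<forall>x. 2*x = v \<longrightarrow> x \<in> J"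
  proof (intro allI impI)
    fix x assume x2: "2 * x = v"
    show "x \<in> J"
    proof (cases "even t")
      case True
      then obtain a where "t = 2 * a" by blast
      then have "2 * x = 2 * (int a * (int p + 1))" using x2 vdef by simp
      then have "x = int a * (int p + 1)" by simp
      then show ?thesis using Jdef x2 vpos by auto
    next
      case False
      have "even (t * p)" unfolding p[symmetric] by simp
      then have "even p" using False by simp
      then have "odd v" using False vdef by simp
      moreover have "even v" unfolding x2[symmetric] by simp
      ultimately show ?thesis by simp
    qed
  qed
  have Jneg: "\<forall>x. 0 < x \<and> x < v \<longrightarrow> (x \<in> J \<longleftrightarrow> v - x \<in> J)"
  proof (intro allI impI)
    fix x assume "0 < x \<and> x < v"
    moreover have "(int p + 1) dvd x \<longleftrightarrow> (int p + 1) dvd (v - x)"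
      using dvd_diff_right_iff[OF qv, of x] by simp
    ultimately show "x \<in> J \<longleftrightarrow> v - x \<in> J" unfolding Jdef mem_Collect_eq by linarith
  qed
  define Aset where "Aset = {a. 1 \<le> a \<and> a \<le> v div 2 \<and> odd a \<and> a \<notin> J}"
  have keyeq: "card {c\<in>F. odd (int_rep v (e c))} = lam * card Aset"
    unfolding Aset_def
    by (rule key[OF finF vpos rngF PMeq H(7) J0 Jhalf Jneg])
  have "(\<Sum>i<m. \<Sum>j<n. int_rep v (entry A i j)) = 0" using H(8) by simp
  then have "(\<Sum>c\<in>{..<m} \<times> {..<n}. int_rep v (e c)) = 0"
    unfolding e_def by (simp add: sum.cartesian_product split_def)
  then have ev1: "even (card {c\<in>{..<m} \<times> {..<n}. odd (int_rep v (e c))})"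
    using even_sum_card[of "{..<m} \<times> {..<n}" "\<lambda>c. int_rep v (e c)"] by simp
  have r0: "int_rep v 0 = 0" using vpos unfolding int_rep_def by simp
  have "{c\<in>{..<m} \<times> {..<n}. odd (int_rep v (e c))} = {c\<in>F. odd (int_rep v (e c))}"
  proof (rule set_eqI, rule iffI)
    fix c assume c: "c \<in> {c\<in>{..<m} \<times> {..<n}. odd (int_rep v (e c))}"
    show "c \<in> {c\<in>F. odd (int_rep v (e c))}"
    proof (cases "c \<in> F")
      case False
      then have "A (fst c) (snd c) = None" using c unfolding F_def filled_cells_def by auto
      then have "e c = 0" unfolding e_def entry_def by simp
      then show ?thesis using c r0 by simp
    qed (use c in auto)
  qed (use Fbox in auto)
  then have "even (lam * card Aset)" using ev1 keyeq by simp
  then have evA: "even (card Aset)" using odd_lam by simp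
  define N where "N = v div 2"
  have N0: "0 \<le> N" and NV: "N < v" using vpos unfolding N_def by auto
  define Od where "Od = {a::int. 1 \<le> a \<and> a \<le> N \<and> odd a}"
  define Om where "Om = {a::int. 1 \<le> a \<and> a \<le> N \<and> odd a \<and> (int p + 1) dvd a}"
  have AOd: "Aset = Od - Om" unfolding Aset_def Od_def Om_def Jdef N_def[symmetric] using NV by auto
  have finOd: "finite Od" unfolding Od_def by (rule finite_subset[of _ "{1..N}"]) auto
  have OmOd: "Om \<subseteq> Od" unfolding Od_def Om_def by auto
  have cA: "card Aset = card Od - card Om" unfolding AOd by (rule card_Diff_subset[OF finite_subset[OF OmOd finOd] OmOd])
  have cle: "card Om \<le> card Od" by (rule card_mono[OF finOd OmOd])
  have cOd: "int (card Od) = (N + 1) div 2" unfolding Od_def by (rule card_odd_upto[OF N0])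
  have cOm: "int (card Om) = (if odd p then 0 else (int t div 2 + 1) div 2)"
  proof (cases "odd p")
    case True
    then have "Om = {}" unfolding Om_def by auto
    then show ?thesis using True by simp
  next
    case False
    have q0: "0 < int p + 1" by simp
    have qo: "odd (int p + 1)" using False by simp
    have "N div (int p + 1) = int t * (int p + 1) div (2 * (int p + 1))"
      unfolding N_def vdef using zdiv_zmult2_eq[of "int p + 1" "int t * (int p + 1)" 2] q0 by simp
    also have "\<dots> = int t div 2" using q0 by (intro div_mult_mult2) simp
    finally have Nq: "N div (int p + 1) = int t div 2" .
    have "card Om = card {j::int. 1 \<le> j \<and> j \<le> N div (int p + 1) \<and> odd j}"
      unfolding Om_def by (rule card_odd_mult[OF q0 qo N0])
    then have "int (card Om) = (int t div 2 + 1) div 2" unfolding Nq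
      using card_odd_upto[of "int t div 2"] by simp
    then show ?thesis using False by simp
  qed
  have evB: "even ((N + 1) div 2 - (if odd p then 0 else (int t div 2 + 1) div 2))"
  proof -
    have "int (card Aset) = int (card Od) - int (card Om)" using cA cle by simp
    then have "int (card Aset) = (N + 1) div 2 - (if odd p then 0 else (int t div 2 + 1) div 2)"
      using cOd cOm by simp
    moreover have "even (int (card Aset))" using evA by simp
    ultimately show ?thesis by simp
  qed
  define D where "D = int d"
  define T where "T = int t"
  define P where "P = int p"
  have p': "2 * D = T * P" unfolding D_def T_def P_def using p by (metis of_nat_mult of_nat_numeral)
  have vD: "v = 2 * D + T" using vdef p' unfolding T_def P_def by (simp add: algebra_simps)
  have ND: "N = D + T div 2" unfolding N_def vD by presburger
  have evC: "even ((D + T div 2 + 1) div 2 - (if odd p then 0 else (T div 2 + 1) div 2))"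
    using evB unfolding ND T_def .
  have Tpos: "0 < T" "0 \<le> D" unfolding T_def D_def using pos by auto
  have part1: "t dvd d \<longrightarrow> (D mod 4 = 0 \<or> (D mod 4 = (- T) mod 4 \<and> (D mod 4 = 1 \<or> D mod 4 = 3)))"
  proof
    assume "t dvd d"
    then obtain r where r: "d = t * r" by blast
    have "t * p = 2 * d" using p by simp
    also have "\<dots> = t * (2 * r)" using r by simp
    finally have "t * p = t * (2 * r)" .
    then have "p = 2 * r" using pos by simp
    then have ep: "\<not> odd p" by simp
    have "even t \<longrightarrow> even d" using r by simp
    then have eTD: "even T \<longrightarrow> even D" unfolding T_def D_def by simp
    have "even ((D + T div 2 + 1) div 2 - (T div 2 + 1) div 2)" using evC ep by simp
    then show "D mod 4 = 0 \<or> (D mod 4 = (- T) mod 4 \<and> (D mod 4 = 1 \<or> D mod 4 = 3))"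
      using eTD Tpos by presburger
  qed
  have part3: "t \<noteq> 2 * d \<and> \<not> t dvd d \<longrightarrow> (2 * d + t) mod 8 = 0"
  proof
    assume a3: "t \<noteq> 2 * d \<and> \<not> t dvd d"
    have op: "odd p"
    proof
      assume "even p"
      then obtain r where "p = 2 * r" by blast
      then have "d = t * r" using p by simp
      then show False using a3 by simp
    qed
    have et: "even t"
    proof (rule ccontr)
      assume "odd t"
      then have "odd (t * p)" using op by simp
      then show False using p by (metis dvd_triv_left)
    qed
    have "even (p + 1)" using op by simp
    then have "4 dvd t * (p + 1)" using et by (metis mult_dvd_mono numeral_Bit0 mult_2)
    then have "4 dvd (2 * d + t)" using p by (simp add: algebra_simps)
    then have f4: "4 dvd (2 * D + T)" unfolding D_def T_def by presburger
    have eT: "even T" using et unfolding T_def by simp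
    have "even ((D + T div 2 + 1) div 2)" using evC op by simp
    then have "(2 * D + T) mod 8 = 0" using f4 eT Tpos by presburger
    then show "(2 * d + t) mod 8 = 0" unfolding D_def T_def by presburger
  qed
  have cellJ: "a \<notin> J \<and> 0 \<le> a \<and> a < v" if "A i j = Some a" for i j a
  proof -
    have ij: "i < m" "j < n" using H(3) that by (metis not_le option.distinct(1))+
    then have cF: "(i, j) \<in> F" unfolding F_def filled_cells_def using that by simp
    have ea: "e (i, j) = a" unfolding e_def entry_def using that by simp
    have r: "0 \<le> a" "a < v" using H(4) that by auto
    have "e (i,j) mod v \<in># image_mset (\<lambda>c. e c mod v) (mset_set F)" using cF finF by simp
    then have "a \<in># pm_entries v m n A" unfolding PMeq using ea r by simp
    then have "count (pm_entries v m n A) a \<noteq> 0" by simp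
    moreover have "count (pm_entries v m n A) a = (if a \<in> J then 0 else lam)" using H(7) r by simp
    ultimately show ?thesis using r by auto
  qed
  have part2: "t = 2 * d \<longrightarrow> even s \<and> even k"
  proof
    assume t2: "t = 2 * d"
    have "t * p = t * 1" using p t2 by auto
    then have p1: "p = 1" using pos by (metis mult_cancel_left not_gr0)
    have vev: "even v" using vdef p1 by simp
    have oddrep: "odd (int_rep v (entry A i j)) \<longleftrightarrow> A i j \<noteq> None" for i j
    proof (cases "A i j")
      case None
      then show ?thesis using r0 unfolding entry_def by simp
    next
      case (Some a)
      have "a \<notin> J" "0 \<le> a" "a < v" using cellJ[OF Some] by auto
      then have "odd a" unfolding Jdef p1 by simp
      moreover have am: "a mod v = a" using \<open>0 \<le> a\<close> \<open>a < v\<close> by simp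
      ultimately have "odd (int_rep v a)" using vev unfolding int_rep_def am by auto
      then show ?thesis using Some unfolding entry_def by simp
    qed
    have "(\<Sum>j<n. int_rep v (entry A 0 j)) = 0" using H(8) pos by simp
    then have "even (card {j\<in>{..<n}. odd (int_rep v (entry A 0 j))})"
      using even_sum_card[of "{..<n}" "\<lambda>j. int_rep v (entry A 0 j)"] by simp
    moreover have "{j\<in>{..<n}. odd (int_rep v (entry A 0 j))} = {j. j < n \<and> A 0 j \<noteq> None}"
      using oddrep by auto
    ultimately have es: "even s" using H(5) pos by simp
    have "(\<Sum>i<m. int_rep v (entry A i 0)) = 0" using H(9) pos by simp
    then have "even (card {i\<in>{..<m}. odd (int_rep v (entry A i 0))})"
      using even_sum_card[of "{..<m}" "\<lambda>i. int_rep v (entry A i 0)"] by simp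
    moreover have "{i\<in>{..<m}. odd (int_rep v (entry A i 0))} = {i. i < m \<and> A i 0 \<noteq> None}"
      using oddrep by auto
    ultimately have ek: "even k" using H(6) pos by simp
    show "even s \<and> even k" using es ek by simp
  qed
  have Dd: "int (n * k div lam) = D" unfolding D_def d_def ..
  show ?thesis unfolding dd Dd using part1 part2 part3 unfolding d_def T_def by simp
qed


end
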